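(* Let $\partial\Omega\subset\mathbb{C}$ be a simple analytic closed curve bounding a domain $\Omega$ (either the bounded interior or the unbounded exterior domain), and let $Z:\mathbb{R}\to\mathbb{C}$ be an analytic $2\pi$-periodic counter-clockwise parametrization of $\partial\Omega$ with $|Z'(s)|>0$ for all real $s$. Let $\tau$ be a real-valued real-analytic function on $\partial\Omega$, let $\tilde\tau(s)=\tau(Z(s))$, and define for $z\in\mathbb{C}\setminus\partial\Omega$ $$v(z)=\frac{-1}{2\pi i}\int_0^{2\pi}\frac{\tilde\tau(s)}{Z(s)-z}Z'(s)\,ds,\qquad v^{(N)}(z)=\frac{-1}{iN}\sum_{j=1}^N\frac{\tilde\tau(2\pi j/N)}{Z(2\pi j/N)-z}Z'(2\pi j/N),$$ so that $\operatorname{Re} v$ is the Laplace double-layer potential with density $\tau$ and $v^{(N)}$ its $N$-point periodic trapezoid rule approximation; set $\epsilon_N(z)=\operatorname{Re}(v^{(N)}(z)-v(z))$. Let $\alpha>0$ be such that $Z$ continues analytically to the strip $|\operatorname{Im} s|<\alpha$ and the annular neighborhood $A_\alpha=Z(\{t+ia: t,a\in\mathbb{R},|a|<\alpha\})$ is such that $Z^{-1}$ is holomorphic (single-valued) in the closure of $A_\alpha$ and $\tau$ extends to a bounded holomorphic function in the closure of $A_\alpha$. Then for each $z\in A_\alpha\setminus\partial\Omega$, writing $s$ for its preimage with $Z(s)=z$ and $|\operatorname{Im} s|<\alpha$, there exist constants $C$ and $N_0$ such that $$|\epsilon_N(z)|\le C e^{-|\operatorname{Im} s|N}\qquad\text{for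 all } N\ge N_0.$$ Moreover, the constant $C$ may be chosen to be any number greater than $|\tilde\tau(s)|=|\tau(z)|$ (with $\tau$ denoting its holomorphic extension).
   Context: $\mathbb{R}^2$ is identified with $\mathbb{C}$. $\tilde\tau$ denotes the analytic continuation of the pullback $\tau\circ Z$ into the strip. *)

theory Defs
  imports "HOL-Complex_Analysis.Complex_Analysis"
begin

definition strip :: "real \<Rightarrow> complex set" where
  "strip a = {s. \<bar>Im s\<bar> < a}"

definition closed_strip :: "real \<Rightarrow> complex set" where
  "closed_strip a = {s. \<bar>Im s\<bar> \<le> a}"

text \<open>The closed curve t in [0,1] to Z(2 pi t), i.e. the boundary curve.\<close>
definition bcurve :: "(complex \<Rightarrow> complex) \<Rightarrow> real \<Rightarrow> complex" where
  "bcurve Z t = Z (complex_of_real (2 * pi * t))"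

text \<open>Cauchy-type integral v(z); its real part is the double-layer potential.
  Z' on the real line is the complex derivative of the analytic Z.\<close>
definition layer_v :: "(complex \<Rightarrow> complex) \<Rightarrow> (complex \<Rightarrow> complex) \<Rightarrow> complex \<Rightarrow> complex" where
  "layer_v Z \<tau> z = (-1 / (2 * pi * \<i>)) *
     integral {0..2*pi} (\<lambda>s::real. \<tau> (Z (of_real s)) / (Z (of_real s) - z) * deriv Z (of_real s))"

definition layer_vN :: "(complex \<Rightarrow> complex) \<Rightarrow> (complex \<Rightarrow> complex) \<Rightarrow> nat \<Rightarrow> complex \<Rightarrow> complex" where
  "layer_vN Z \<tau> N z = (-1 / (\<i> * of_nat N)) *
     (\<Sum>j=1..N. let s = complex_of_real (2 * pi * real j / real N) in
        \<tau> (Z s) / (Z s - z) * deriv Z s)"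

definition layer_err :: "(complex \<Rightarrow> complex) \<Rightarrow> (complex \<Rightarrow> complex) \<Rightarrow> nat \<Rightarrow> complex \<Rightarrow> real" where
  "layer_err Z \<tau> N z = Re (layer_vN Z \<tau> N z - layer_v Z \<tau> z)"

end

theory Submission
  imports Defs "HOL-Real_Asymp.Real_Asymp"
begin

lemma contour_integral_linepath_shift:
  "contour_integral (linepath (a + c) (b + c)) f = contour_integral (linepath a b) (\<lambda>w. f (w + c))"
  unfolding contour_integral_integral
  by (simp add: linepath_def algebra_simps scaleR_conv_of_real)

lemma residue_quot:
  assumes "open S" "p \<in> S" "A holomorphic_on S" "B holomorphic_on S" "B p = 0"
    "(B has_field_derivative d) (at p)" "d \<noteq> 0" "\<And>w. w \<in> S \<Longrightarrow> w \<noteq> p \<Longrightarrow> B w \<noteq> 0"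
  shows "residue (\<lambda>w. A w / B w) p = A p / d"
proof (rule residue_simple'[OF assms(1,2)])
  show "(\<lambda>w. A w / B w) holomorphic_on S - {p}"
    using assms by (intro holomorphic_intros) (auto intro: holomorphic_on_subset)
  have "((\<lambda>w. (B w - B p) / (w - p)) \<longlongrightarrow> d) (at p)"
    using assms(6) by (simp add: has_field_derivative_iff)
  hence "((\<lambda>w. inverse ((B w - B p) / (w - p))) \<longlongrightarrow> inverse d) (at p)"
    using assms(7) by (intro tendsto_inverse) auto
  moreover have "isCont A p"
    using assms(1-3) holomorphic_on_imp_continuous_on continuous_on_eq_continuous_at by blast
  hence "(A \<longlongrightarrow> A p) (at p)" by (simp add: isCont_def)
  ultimately have "((\<lambda>w. A w * inverse ((B w - B p) / (w - p))) \<longlongrightarrow> A p * inverse d) (at p)"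
    by (intro tendsto_mult)
  moreover have eq: "(\<lambda>w. A w * inverse ((B w - B p) / (w - p))) = (\<lambda>w. A w / B w * (w - p))"
    using assms(5) by (simp add: inverse_divide fun_eq_iff)
  ultimately have "((\<lambda>w. A w / B w * (w - p)) \<longlongrightarrow> A p * inverse d) (at p)"
    by simp
  then show "((\<lambda>w. A w / B w * (w - p)) \<longlongrightarrow> A p / d) (at p)"
    by (simp add: divide_inverse)
qed

lemma rect_residue:
  fixes g :: "complex \<Rightarrow> complex"
  assumes S: "open S" "connected S" and fin: "finite pts" and hol: "g holomorphic_on S - pts"
    and sub: "cbox (Complex x0 y1) (Complex (x0+2*pi) y2) \<subseteq> S"
    and pts: "pts \<subseteq> box (Complex x0 y1) (Complex (x0+2*pi) y2)" and y: "y1 < y2"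
    and per: "\<And>w. w \<in> cbox (Complex x0 y1) (Complex (x0+2*pi) y2) \<Longrightarrow> g (w + of_real(2*pi)) = g w"
  shows "contour_integral (linepath (Complex x0 y1) (Complex (x0+2*pi) y1)) g
       - contour_integral (linepath (Complex x0 y2) (Complex (x0+2*pi) y2)) g
       = 2*pi*\<i> * (\<Sum>p\<in>pts. residue g p)"
proof -
  define a1 a2 a3 a4 where "a1 = Complex x0 y1" "a2 = Complex (x0+2*pi) y1"
    "a3 = Complex (x0+2*pi) y2" "a4 = Complex x0 y2"
  have le: "Re a1 \<le> Re a3" "Im a1 \<le> Im a3" using y by (auto simp: a1_a2_a3_a4_def)
  have rp: "rectpath a1 a3 = linepath a1 a2 +++ linepath a2 a3 +++ linepath a3 a4 +++ linepath a4 a1"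
    by (simp add: rectpath_def Let_def a1_a2_a3_a4_def)
  have pim: "path_image (rectpath a1 a3) = cbox a1 a3 - box a1 a3"
    using le by (rule path_image_rectpath_cbox_minus_box)
  have pimS: "path_image (rectpath a1 a3) \<subseteq> S - pts"
    using pim sub pts by (auto simp: a1_a2_a3_a4_def)
  have cont: "continuous_on (path_image (rectpath a1 a3)) g"
    using holomorphic_on_imp_continuous_on[OF hol] pimS continuous_on_subset by blast
  have segs: "closed_segment a1 a2 \<subseteq> path_image (rectpath a1 a3)"
    "closed_segment a2 a3 \<subseteq> path_image (rectpath a1 a3)"
    "closed_segment a3 a4 \<subseteq> path_image (rectpath a1 a3)"
    "closed_segment a4 a1 \<subseteq> path_image (rectpath a1 a3)"
    unfolding rp by (auto simp: path_image_join)
  have ci: "g contour_integrable_on linepath a1 a2" "g contour_integrable_on linepath a2 a3"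
    "g contour_integrable_on linepath a3 a4" "g contour_integrable_on linepath a4 a1"
    using segs by (auto intro!: contour_integrable_continuous_linepath continuous_on_subset[OF cont])
  have "contour_integral (rectpath a1 a3) g = 2*pi*\<i> * (\<Sum>p\<in>pts. winding_number (rectpath a1 a3) p * residue g p)"
  proof (rule Residue_theorem[OF S fin hol])
    show "\<forall>z. z \<notin> S \<longrightarrow> winding_number (rectpath a1 a3) z = 0"
      using sub le by (auto intro!: winding_number_rectpath_outside simp: a1_a2_a3_a4_def)
  qed (use pimS in auto)
  also have "(\<Sum>p\<in>pts. winding_number (rectpath a1 a3) p * residue g p) = (\<Sum>p\<in>pts. residue g p)"
    using pts by (intro sum.cong) (auto simp: winding_number_rectpath a1_a2_a3_a4_def)
  also have "contour_integral (rectpath a1 a3) g = contour_integral (linepath a1 a2) g +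
     contour_integral (linepath a2 a3) g + contour_integral (linepath a3 a4) g + contour_integral (linepath a4 a1) g"
    unfolding rp using ci by (simp add: contour_integrable_joinI)
  also have "contour_integral (linepath a3 a4) g = - contour_integral (linepath a4 a3) g"
    using segs by (intro contour_integral_reverse_linepath continuous_on_subset[OF cont]) auto
  also have "contour_integral (linepath a2 a3) g = - contour_integral (linepath a4 a1) g"
  proof -
    have "contour_integral (linepath a2 a3) g = contour_integral (linepath (a1 + of_real(2*pi)) (a4 + of_real(2*pi))) g"
    proof -
      have "a2 = a1 + of_real(2*pi)" "a3 = a4 + of_real(2*pi)"
        by (simp_all add: a1_a2_a3_a4_def complex_eq_iff)
      thus ?thesis by simp
    qed
    also have "\<dots> = contour_integral (linepath a1 a4) (\<lambda>w. g (w + of_real(2*pi)))"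
      by (rule contour_integral_linepath_shift)
    also have "\<dots> = contour_integral (linepath a1 a4) g"
    proof (rule contour_integral_eq)
      fix x assume "x \<in> path_image (linepath a1 a4)"
      hence "x \<in> cbox a1 a3"
        using segs(4) pim by (auto simp: closed_segment_commute)
      thus "g (x + of_real (2 * pi)) = g x" using per by (simp add: a1_a2_a3_a4_def)
    qed
    also have "\<dots> = - contour_integral (linepath a4 a1) g"
      using segs by (intro contour_integral_reverse_linepath continuous_on_subset[OF cont])
        (auto simp: closed_segment_commute)
    finally show ?thesis .
  qed
  finally show ?thesis by (simp add: a1_a2_a3_a4_def algebra_simps)
qed

lemma open_strip: "open (strip a)"
  unfolding strip_def by (intro open_Collect_less continuous_intros)

lemma convex_strip: "convex (strip a)"
proof -
  have "strip a = Im -` {-a<..<a}" by (auto simp: strip_def abs_less_iff)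
  moreover have "convex (Im -` {-a<..<a})"
    by (intro convex_linear_vimage bounded_linear.linear[OF bounded_linear_Im] convex_real_interval)
  ultimately show ?thesis by simp
qed

lemma kb1:
  assumes "cmod q = exp x" "x > 0"
  shows "cmod (1 / (q - 1)) \<le> 1 / (exp x - 1)"
proof -
  have "cmod q \<le> cmod (q - 1) + 1" using norm_triangle_ineq2[of q 1] by simp
  hence "exp x - 1 \<le> cmod (q - 1)" using assms by simp
  moreover have "exp x - 1 > 0" using assms by simp
  ultimately show ?thesis by (simp add: norm_divide frac_le)
qed

lemma kb2:
  assumes "cmod q = exp (-x)" "x > 0"
  shows "cmod (q / (q - 1)) \<le> 1 / (exp x - 1)"
proof -
  have "1 \<le> cmod (1 - q) + cmod q" using norm_triangle_ineq2[of 1 q] by simp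
  hence h: "1 - exp (-x) \<le> cmod (q - 1)" using assms by (simp add: norm_minus_commute)
  have p: "1 - exp (-x) > 0" using assms by simp
  have "cmod (q / (q - 1)) = exp (-x) / cmod (q - 1)" using assms by (simp add: norm_divide)
  also have "\<dots> \<le> exp (-x) / (1 - exp (-x))" using h p by (simp add: frac_le)
  also have "\<dots> = 1 / (exp x - 1)"
    using p by (simp add: exp_minus field_simps)
  finally show ?thesis .
qed

lemma norm_exp_iN: "cmod (exp (\<i> * of_nat N * w)) = exp (- real N * Im w)"
  by (simp add: norm_exp_eq_Re)

lemma final_limit:
  fixes c \<beta> T M C :: real
  assumes "0 < c" "c < \<beta>" "T < C"
  shows "eventually (\<lambda>N. T / (exp (real N * c) - 1) + 2 * M / (exp (real N * \<beta>) - 1)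
            \<le> C * exp (- c * real N)) sequentially"
proof -
  have l1: "((\<lambda>N::real. exp (N * c) / (exp (N * c) - 1)) \<longlongrightarrow> 1) at_top"
    using assms by real_asymp
  have l2: "((\<lambda>N::real. exp (N * c) / (exp (N * \<beta>) - 1)) \<longlongrightarrow> 0) at_top"
    using assms by real_asymp
  have "((\<lambda>N::real. T * (exp (N * c) / (exp (N * c) - 1)) + 2 * M * (exp (N * c) / (exp (N * \<beta>) - 1)))
        \<longlongrightarrow> T * 1 + 2 * M * 0) at_top"
    by (intro tendsto_intros l1 l2)
  hence "((\<lambda>N::nat. T * (exp (real N * c) / (exp (real N * c) - 1)) + 2 * M * (exp (real N * c) / (exp (real N * \<beta>) - 1)))
        \<longlongrightarrow> T) sequentially"
    using filterlim_compose filterlim_real_sequentially by fastforce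
  hence ev: "eventually (\<lambda>N::nat. T * (exp (real N * c) / (exp (real N * c) - 1)) + 2 * M * (exp (real N * c) / (exp (real N * \<beta>) - 1)) < C) sequentially"
    using assms(3) order_tendstoD(2) by blast
  show ?thesis
  proof (rule eventually_mono[OF ev])
    fix N :: nat
    assume h: "T * (exp (real N * c) / (exp (real N * c) - 1)) + 2 * M * (exp (real N * c) / (exp (real N * \<beta>) - 1)) < C"
    have "T / (exp (real N * c) - 1) + 2 * M / (exp (real N * \<beta>) - 1)
        = exp (- c * real N) * (T * (exp (real N * c) / (exp (real N * c) - 1)) + 2 * M * (exp (real N * c) / (exp (real N * \<beta>) - 1)))"
      by (simp add: field_simps exp_minus mult.commute)
    also have "\<dots> \<le> exp (- c * real N) * C" using h by (intro mult_left_mono) auto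
    finally show "T / (exp (real N * c) - 1) + 2 * M / (exp (real N * \<beta>) - 1) \<le> C * exp (- c * real N)"
      by (simp add: mult.commute)
  qed
qed

lemma trap_err:
  fixes A B B' f :: "complex \<Rightarrow> complex" and s R :: complex and \<alpha> \<beta> M :: real and N :: nat
  defines "f \<equiv> \<lambda>w. A w / B w"
  assumes ab: "0 < \<bar>Im s\<bar>" "\<bar>Im s\<bar> < \<beta>" "\<beta> < \<alpha>"
    and holA: "A holomorphic_on strip \<alpha>" and holB: "B holomorphic_on strip \<alpha>"
    and derB: "\<And>w. w \<in> strip \<alpha> \<Longrightarrow> (B has_field_derivative B' w) (at w)"
    and perA: "\<And>w. w \<in> strip \<alpha> \<Longrightarrow> A (w + of_real(2*pi)) = A w"
    and perB: "\<And>w. w \<in> strip \<alpha> \<Longrightarrow> B (w + of_real(2*pi)) = B w"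
    and zeroB: "\<And>k::int. B (s + of_real (of_int k * (2*pi))) = 0"
    and zeroB': "\<And>w. w \<in> strip \<alpha> \<Longrightarrow> B w = 0 \<Longrightarrow> \<exists>k::int. w = s + of_real (of_int k * (2*pi))"
    and derne: "\<And>k::int. B' (s + of_real (of_int k * (2*pi))) \<noteq> 0"
    and res: "\<And>k::int. A (s + of_real (of_int k * (2*pi))) / B' (s + of_real (of_int k * (2*pi))) = R"
    and Mb: "\<And>w. \<bar>Im w\<bar> = \<beta> \<Longrightarrow> 0 \<le> Re w \<Longrightarrow> Re w \<le> 4*pi \<Longrightarrow> cmod (f w) \<le> M"
    and N: "N \<ge> 1"
  shows "cmod ((2*pi/N) * (\<Sum>j=1..N. f (of_real (2*pi*real j/real N)))
            - contour_integral (linepath 0 (of_real(2*pi))) f)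
         \<le> 2*pi*(cmod R/(exp(N*\<bar>Im s\<bar>) - 1) + 2*M/(exp(N*\<beta>) - 1))"
proof -
  define S0 where "S0 = strip \<alpha>"
  define b where "b = Im s"
  have S0open: "open S0" unfolding S0_def by (rule open_strip)
  have inS0: "\<And>w. w \<in> S0 \<longleftrightarrow> \<bar>Im w\<bar> < \<alpha>" by (simp add: S0_def strip_def)
  have alpha: "\<alpha> > 0" "\<beta> > 0" using ab by linarith+
  have bne: "b \<noteq> 0" using ab by (simp add: b_def)
  have Bne: "B w \<noteq> 0" if "w \<in> S0" "Im w \<noteq> b" for w
  proof
    assume "B w = 0"
    moreover have "w \<in> strip \<alpha>" using that(1) by (simp add: S0_def)
    ultimately obtain k::int where "w = s + of_real (of_int k * (2*pi))" using zeroB' by blast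
    hence "Im w = b" by (simp add: b_def)
    thus False using that by simp
  qed
  define D where "D = (\<lambda>w. exp (\<i> * of_nat N * w) - 1)"
  have Npos: "real N > 0" using N by simp
  have Dzero: "Im w = 0 \<and> (\<exists>n::int. Re w = 2*pi*n/N)" if "D w = 0" for w
  proof -
    have "exp (\<i> * of_nat N * w) = 1" using that by (simp add: D_def)
    then obtain n::int where h: "Re (\<i> * of_nat N * w) = 0" "Im (\<i> * of_nat N * w) = of_int (2*n) * pi"
      unfolding exp_eq_1 by blast
    have "Im w = 0" using h(1) Npos by simp
    moreover have "Re w = 2*pi*n/N" using h(2) Npos by (simp add: field_simps)
    ultimately show ?thesis by blast
  qed
  have Dne: "D w \<noteq> 0" if "Im w \<noteq> 0" for w using Dzero that by blast
  have Dper: "D (w + of_real(2*pi)) = D w" for w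
  proof -
    have "\<i> * of_nat N * (w + of_real(2*pi)) = \<i> * of_nat N * w + \<i> * (of_int (int N) * (of_real pi * 2))"
      by (simp add: algebra_simps)
    thus ?thesis unfolding D_def by (simp only: exp_plus_2pin)
  qed
  have S0shift: "w + of_real c \<in> S0" if "w \<in> S0" for w c using that by (simp add: inS0)
  have fper: "f (w + of_real(2*pi)) = f w" if "w \<in> S0" for w
    using that perA perB by (simp add: f_def S0_def)
  have fhol: "f holomorphic_on T" if "T \<subseteq> S0" "\<And>w. w \<in> T \<Longrightarrow> B w \<noteq> 0" for T
    unfolding f_def using that holA holB
    by (intro holomorphic_intros) (auto simp: S0_def intro: holomorphic_on_subset)
  have Mpos: "0 \<le> M"
    using Mb[of "Complex 0 \<beta>"] alpha by (smt (verit) complex.sel norm_ge_zero pi_gt_zero)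
  obtain a0 where a0: "0 < a0" "a0 < 2*pi/N" "\<And>k::int. Re s + of_int k * (2*pi) \<noteq> a0"
  proof (cases "\<exists>k::int. Re s + of_int k * (2*pi) = pi/N")
    case False
    show ?thesis by (rule that[of "pi/N"]) (use False Npos in \<open>auto simp: field_simps\<close>)
  next
    case True
    then obtain k::int where k: "Re s + of_int k * (2*pi) = pi/N" by blast
    show ?thesis
    proof (rule that[of "pi/(2*N)"])
      show "0 < pi/(2*N)" using Npos by simp
      show "pi/(2*N) < 2*pi/N" using Npos by (simp add: field_simps)
      fix k' :: int
      show "Re s + of_int k' * (2*pi) \<noteq> pi/(2*N)"
      proof
        assume k': "Re s + of_int k' * (2*pi) = pi/(2*N)"
        have "of_int (k' - k) * (2*pi) = pi/(2*N) - pi/N" using k k' by (simp add: algebra_simps)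
        hence "of_int (k' - k) * (4 * real N) * pi = - pi" using Npos by (simp add: field_simps)
        hence "(of_int (k' - k) * (4 * real N) + 1) * pi = 0" by (simp add: algebra_simps)
        hence "of_int (k' - k) * (4 * real N) = -1" using pi_neq_zero by simp
        hence "of_int ((k' - k) * (4 * int N)) = (of_int (-1) :: real)" by simp
        hence "(k' - k) * (4 * int N) = -1" using of_int_eq_iff by blast
        moreover have "(4::int) dvd (k' - k) * (4 * int N)" by simp
        ultimately show False by simp
      qed
    qed
  qed
  have "2*pi/N \<le> 2*pi" using N Npos by (simp add: field_simps)
  hence a0le: "a0 \<le> 2*pi" using a0(2) by linarith
  define kp where "kp = \<lfloor>(a0 + 2*pi - Re s)/(2*pi)\<rfloor>"
  define p where "p = s + of_real (of_int kp * (2*pi))"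
  have Rep: "Re p = Re s + of_int kp * (2*pi)" "Im p = b" by (simp_all add: p_def b_def)
  have "of_int kp \<le> (a0 + 2*pi - Re s)/(2*pi)" "(a0 + 2*pi - Re s)/(2*pi) < of_int kp + 1"
    unfolding kp_def by linarith+
  hence kp1: "of_int kp * (2*pi) \<le> a0 + 2*pi - Re s" "a0 + 2*pi - Re s < of_int kp * (2*pi) + 2*pi"
    by (simp_all add: field_simps)
  have pne: "Re s + of_int kp * (2*pi) \<noteq> a0 + 2*pi"
    using a0(3)[of "kp - 1"] by (simp add: algebra_simps)
  have pbd: "a0 < Re p" "Re p < a0 + 2*pi" using kp1 pne Rep by linarith+
  have pS0: "p \<in> S0" using ab by (simp add: inS0 Rep b_def)
  have Bp: "B p = 0" "B' p \<noteq> 0" "A p / B' p = R"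
    unfolding p_def using zeroB derne res by auto
  define \<delta> where "\<delta> = min (min a0 (2*pi/N - a0)) (min (Re p - a0) (a0 + 2*pi - Re p)) / 2"
  have \<delta>: "0 < \<delta>" "\<delta> < a0" "\<delta> < 2*pi/N - a0" "\<delta> < Re p - a0" "\<delta> < a0 + 2*pi - Re p"
    using a0 pbd unfolding \<delta>_def by auto
  define \<beta>' where "\<beta>' = (\<beta> + \<alpha>)/2"
  have \<beta>': "\<beta> < \<beta>'" "\<beta>' < \<alpha>" using ab by (auto simp: \<beta>'_def)
  define tj where "tj = (\<lambda>j::nat. complex_of_real (2*pi*real j/real N))"
  define Sb where "Sb = box (Complex (a0 - \<delta>) (-\<beta>')) (Complex (a0 + 2*pi + \<delta>) \<beta>')"
  define pts where "pts = tj ` {1..N} \<union> {p}"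
  have inSb: "w \<in> Sb \<longleftrightarrow> a0 - \<delta> < Re w \<and> Re w < a0 + 2*pi + \<delta> \<and> -\<beta>' < Im w \<and> Im w < \<beta>'" for w
    by (auto simp: Sb_def in_box_complex_iff)
  have SbS0: "Sb \<subseteq> S0" using \<beta>' by (auto simp: inSb inS0)
  have DzeroSb: "w \<in> tj ` {1..N}" if wS: "w \<in> Sb" and Dw: "D w = 0" for w
  proof -
    obtain n::int where n: "Im w = 0" "Re w = 2*pi*n/N" using Dzero[OF Dw] by blast
    have "0 < 2*pi*n/N" using n wS \<delta> by (simp add: inSb)
    hence n0: "n > 0" using Npos by (simp add: zero_less_divide_iff zero_less_mult_iff)
    have "2*pi*n/N < 2*pi/N + 2*pi" using n wS \<delta> by (simp add: inSb)
    hence "2*pi*n < 2*pi + 2*pi*N" using Npos by (simp add: field_simps)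
    hence "(2*pi) * real_of_int n < (2*pi) * (1 + real N)" by (simp add: algebra_simps)
    hence "real_of_int n < 1 + real N" using mult_less_cancel_left_pos[of "2*pi"] by simp
    hence n1: "n \<le> int N" by linarith
    have "w = tj (nat n)" using n n0 by (simp add: tj_def complex_eq_iff)
    moreover have "nat n \<in> {1..N}" using n0 n1 by auto
    ultimately show ?thesis by blast
  qed
  have BzeroSb: "w = p" if wS: "w \<in> Sb" and Bw: "B w = 0" for w
  proof -
    have "w \<in> strip \<alpha>" using wS SbS0 by (auto simp: S0_def)
    then obtain k::int where k: "w = s + of_real (of_int k * (2*pi))"
      using zeroB' Bw by blast
    have "Re w = Re s + of_int k * (2*pi)" using k by simp
    hence "Re w - Re p = of_int (k - kp) * (2*pi)" using Rep by (simp add: algebra_simps)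
    moreover have "Re w - Re p < 2*pi" "Re w - Re p > -2*pi" using wS \<delta> by (auto simp: inSb)
    ultimately have h1: "(2*pi) * of_int (k - kp) < (2*pi) * 1" and h2: "(2*pi) * (-1::real) < (2*pi) * of_int (k - kp)"
      by (auto simp: algebra_simps)
    have "of_int (k - kp) < (1::real)" using h1 by (subst (asm) mult_less_cancel_left_pos) auto
    moreover have "(-1::real) < of_int (k - kp)" using h2 by (subst (asm) mult_less_cancel_left_pos) auto
    ultimately have "k = kp" by linarith
    thus ?thesis using k by (simp add: p_def)
  qed
  have Dtj: "D (tj j) = 0" for j
  proof -
    have e: "\<i> * of_nat N * tj j = 0 + \<i> * (of_int (int j) * (of_real pi * 2))"
      using Npos by (simp add: tj_def field_simps)
    have "exp (\<i> * of_nat N * tj j) = exp 0"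
      by (subst e, subst exp_plus_2pin) (rule refl)
    thus ?thesis by (simp add: D_def)
  qed
  have tjS0: "tj j \<in> S0" for j using alpha by (simp add: tj_def inS0)
  have Btj: "B (tj j) \<noteq> 0" for j using Bne[OF tjS0] bne by (simp add: tj_def)
  have tjbox: "tj j \<in> box (Complex a0 (-\<beta>)) (Complex (a0+2*pi) \<beta>)" if "j \<in> {1..N}" for j
  proof -
    have "2*pi/N \<le> 2*pi*j/N" using that Npos by (simp add: divide_right_mono)
    moreover have "2*pi*j/N \<le> 2*pi" using that Npos by (simp add: field_simps)
    ultimately show ?thesis using a0 alpha by (auto simp: tj_def in_box_complex_iff)
  qed
  have pbox: "p \<in> box (Complex a0 (-\<beta>)) (Complex (a0+2*pi) \<beta>)"
    using pbd ab by (auto simp: in_box_complex_iff Rep b_def abs_less_iff)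
  have ptj: "p \<notin> tj ` {1..N}" using Rep bne by (auto simp: tj_def)
  have Sbopen: "open Sb" and Sbconn: "connected Sb" by (auto simp: Sb_def intro!: convex_connected)
  have cboxSb: "cbox (Complex a0 (-\<beta>)) (Complex (a0+2*pi) \<beta>) \<subseteq> Sb"
    using \<delta> \<beta>' by (auto simp: inSb in_cbox_complex_iff)
  have finpts: "finite pts" by (simp add: pts_def)
  have Dhol: "D holomorphic_on UNIV" unfolding D_def by (intro holomorphic_intros)
  have gen: "contour_integral (linepath (Complex a0 (-\<beta>)) (Complex (a0+2*pi) (-\<beta>))) (\<lambda>w. f w * (E w / D w))
      - contour_integral (linepath (Complex a0 \<beta>) (Complex (a0+2*pi) \<beta>)) (\<lambda>w. f w * (E w / D w))
      = (2*pi/N) * (\<Sum>j=1..N. f (tj j)) + 2*pi*\<i>*(R * (E p / D p))"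
    if Ehol: "E holomorphic_on UNIV" and Eper: "\<And>w. E (w + of_real(2*pi)) = E w"
      and E1: "\<And>j. E (tj j) = 1" for E
  proof -
    define G where "G = (\<lambda>w. f w * (E w / D w))"
    have nz: "B w \<noteq> 0 \<and> D w \<noteq> 0" if "w \<in> Sb - pts" for w
      using that DzeroSb BzeroSb by (auto simp: pts_def)
    have holG: "G holomorphic_on Sb - pts"
    proof -
      have "f holomorphic_on Sb - pts" using SbS0 nz by (intro fhol) auto
      moreover have "(\<lambda>w. E w / D w) holomorphic_on Sb - pts"
        using nz by (intro holomorphic_on_divide holomorphic_on_subset[OF Ehol] holomorphic_on_subset[OF Dhol]) auto
      ultimately show ?thesis unfolding G_def by (intro holomorphic_on_mult)
    qed
    have perG: "G (w + of_real (2*pi)) = G w" if "w \<in> cbox (Complex a0 (-\<beta>)) (Complex (a0 + 2*pi) \<beta>)" for w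
    proof -
      have "w \<in> S0" using that cboxSb SbS0 by auto
      thus ?thesis unfolding G_def using fper Eper Dper by simp
    qed
    have rect: "contour_integral (linepath (Complex a0 (-\<beta>)) (Complex (a0+2*pi) (-\<beta>))) G
      - contour_integral (linepath (Complex a0 \<beta>) (Complex (a0+2*pi) \<beta>)) G
      = 2*pi*\<i> * (\<Sum>q\<in>pts. residue G q)"
      by (rule rect_residue[OF Sbopen Sbconn finpts holG cboxSb _ _ perG])
         (use tjbox pbox alpha in \<open>auto simp: pts_def\<close>)
    have rtj: "residue G (tj j) = f (tj j) / (\<i> * of_nat N)" if j: "j \<in> {1..N}" for j
    proof -
      define S' where "S' = Sb - (pts - {tj j})"
      have S'open: "open S'" unfolding S'_def using finpts
        by (intro open_Diff Sbopen finite_imp_closed) auto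
      have tjS': "tj j \<in> S'" using tjbox[OF j] cboxSb box_subset_cbox by (auto simp: S'_def)
      have S'S0: "S' \<subseteq> S0" using SbS0 by (auto simp: S'_def)
      have BS': "B w \<noteq> 0" if "w \<in> S'" for w
      proof
        assume "B w = 0"
        hence "w = p" using BzeroSb that by (auto simp: S'_def)
        moreover have "p \<in> pts - {tj j}" using ptj j by (auto simp: pts_def)
        ultimately show False using that by (auto simp: S'_def)
      qed
      have DS': "D w \<noteq> 0" if "w \<in> S'" "w \<noteq> tj j" for w
      proof
        assume "D w = 0"
        hence "w \<in> tj ` {1..N}" using DzeroSb that by (auto simp: S'_def)
        thus False using that by (auto simp: S'_def pts_def)
      qed
      have "G = (\<lambda>w. (f w * E w) / D w)" by (auto simp: G_def fun_eq_iff)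
      moreover have "residue (\<lambda>w. (f w * E w) / D w) (tj j) = (f (tj j) * E (tj j)) / (\<i> * of_nat N)"
      proof (rule residue_quot[OF S'open tjS'])
        show "(\<lambda>w. f w * E w) holomorphic_on S'"
          using fhol[OF S'S0 BS'] holomorphic_on_subset[OF Ehol] by (intro holomorphic_on_mult) auto
        show "D holomorphic_on S'" using Dhol by (rule holomorphic_on_subset) auto
        show "D (tj j) = 0" by (rule Dtj)
        show "(D has_field_derivative \<i> * of_nat N) (at (tj j))"
        proof -
          have "(D has_field_derivative exp (\<i> * of_nat N * tj j) * (\<i> * of_nat N)) (at (tj j))"
            unfolding D_def by (auto intro!: derivative_eq_intros)
          moreover have "exp (\<i> * of_nat N * tj j) = 1" using Dtj[of j] by (simp add: D_def)
          ultimately show ?thesis by simp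
        qed
        show "\<i> * of_nat N \<noteq> 0" using Npos by simp
        show "\<And>w. w \<in> S' \<Longrightarrow> w \<noteq> tj j \<Longrightarrow> D w \<noteq> 0" by (rule DS')
      qed
      ultimately show ?thesis using E1 by simp
    qed
    have rp: "residue G p = R * (E p / D p)"
    proof -
      define S' where "S' = Sb - (pts - {p})"
      have S'open: "open S'" unfolding S'_def using finpts
        by (intro open_Diff Sbopen finite_imp_closed) auto
      have pS': "p \<in> S'" using pbox cboxSb box_subset_cbox by (auto simp: S'_def)
      have S'S0: "S' \<subseteq> S0" using SbS0 by (auto simp: S'_def)
      have DS': "D w \<noteq> 0" if "w \<in> S'" for w
      proof
        assume "D w = 0"
        hence "w \<in> tj ` {1..N}" using DzeroSb that by (auto simp: S'_def)
        thus False using that ptj by (auto simp: S'_def pts_def)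
      qed
      have BS': "B w \<noteq> 0" if "w \<in> S'" "w \<noteq> p" for w
        using BzeroSb that by (auto simp: S'_def)
      have "G = (\<lambda>w. (A w * (E w / D w)) / B w)" by (auto simp: G_def f_def fun_eq_iff)
      moreover have "residue (\<lambda>w. (A w * (E w / D w)) / B w) p = (A p * (E p / D p)) / B' p"
      proof (rule residue_quot[OF S'open pS'])
        show "(\<lambda>w. A w * (E w / D w)) holomorphic_on S'"
          using S'S0 DS' holomorphic_on_subset[OF holA] holomorphic_on_subset[OF Ehol]
            holomorphic_on_subset[OF Dhol]
          by (intro holomorphic_on_mult holomorphic_on_divide) (auto simp: S0_def)
        show "B holomorphic_on S'" using S'S0 holB by (auto simp: S0_def intro: holomorphic_on_subset)
        show "B p = 0" by (rule Bp)
        show "(B has_field_derivative B' p) (at p)" using derB pS0 by (simp add: S0_def)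
        show "B' p \<noteq> 0" by (rule Bp)
        show "\<And>w. w \<in> S' \<Longrightarrow> w \<noteq> p \<Longrightarrow> B w \<noteq> 0" by (rule BS')
      qed
      moreover have "(A p * (E p / D p)) / B' p = (A p / B' p) * (E p / D p)" by simp
      ultimately show ?thesis using Bp by simp
    qed
    have sum: "(\<Sum>q\<in>pts. residue G q) = (\<Sum>j=1..N. f (tj j)) / (\<i> * of_nat N) + R * (E p / D p)"
    proof -
      have "(\<Sum>q\<in>pts. residue G q) = (\<Sum>q\<in>tj`{1..N}. residue G q) + residue G p"
        unfolding pts_def using ptj by (subst sum.union_disjoint) auto
      also have "(\<Sum>q\<in>tj`{1..N}. residue G q) = (\<Sum>j=1..N. residue G (tj j))"
        by (rule sum.reindex_cong[where l=tj]) (use Npos in \<open>auto simp: inj_on_def tj_def\<close>)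
      also have "\<dots> = (\<Sum>j=1..N. f (tj j) / (\<i> * of_nat N))" by (rule sum.cong) (auto simp: rtj)
      also have "\<dots> = (\<Sum>j=1..N. f (tj j)) / (\<i> * of_nat N)" by (simp add: sum_divide_distrib)
      finally show ?thesis using rp by simp
    qed
    have alg: "2*pi*\<i> * ((\<Sum>j=1..N. f (tj j)) / (\<i> * of_nat N) + R * (E p / D p))
        = (2*pi/N) * (\<Sum>j=1..N. f (tj j)) + 2*pi*\<i>*(R * (E p / D p))"
      using Npos by (simp add: field_simps)
    from rect[unfolded sum alg] show ?thesis by (simp only: G_def)
  qed
  define W where "W = {w. w \<in> S0 \<and> Im w \<noteq> 0 \<and> Im w \<noteq> b}"
  have WS0: "W \<subseteq> S0" by (auto simp: W_def)
  have fW: "f holomorphic_on W" using WS0 Bne by (intro fhol) (auto simp: W_def)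
  have DW: "D w \<noteq> 0" if "w \<in> W" for w using Dne that by (auto simp: W_def)
  have seg: "closed_segment (Complex a0 y) (Complex (a0+2*pi) y) = {w. Im w = y \<and> a0 \<le> Re w \<and> Re w \<le> a0+2*pi}" for y
    using alpha by (auto simp: closed_segment_same_Im closed_segment_eq_real_ivl)
  have segW: "closed_segment (Complex a0 y) (Complex (a0+2*pi) y) \<subseteq> W" if "y = \<beta> \<or> y = -\<beta>" for y
    using that ab \<beta>' by (auto simp: seg W_def inS0 b_def)
  have ci: "g contour_integrable_on linepath (Complex a0 y) (Complex (a0+2*pi) y)"
    if "y = \<beta> \<or> y = -\<beta>" "g holomorphic_on W" for y g
  proof -
    have "continuous_on W g" using that(2) by (rule holomorphic_on_imp_continuous_on)
    thus ?thesis by (rule contour_integrable_continuous_linepath[OF continuous_on_subset[OF _ segW[OF that(1)]]])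
  qed
  have lb: "cmod (contour_integral (linepath (Complex a0 y) (Complex (a0+2*pi) y)) (\<lambda>w. f w * k w)) \<le> M * K * (2*pi)"
    if y: "y = \<beta> \<or> y = -\<beta>" and kh: "k holomorphic_on W" and kb: "\<And>w. Im w = y \<Longrightarrow> cmod (k w) \<le> K" for y k K
  proof -
    have "cmod (k (Complex 0 y)) \<le> K" using kb by simp
    hence K0: "0 \<le> K" using norm_ge_zero[of "k (Complex 0 y)"] by linarith
    have "cmod (contour_integral (linepath (Complex a0 y) (Complex (a0+2*pi) y)) (\<lambda>w. f w * k w))
        \<le> M * K * cmod (Complex (a0+2*pi) y - Complex a0 y)"
    proof (rule contour_integral_bound_linepath)
      show "(\<lambda>w. f w * k w) contour_integrable_on linepath (Complex a0 y) (Complex (a0 + 2 * pi) y)"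
        using y fW kh by (intro ci holomorphic_on_mult) auto
      show "0 \<le> M * K" using Mpos K0 by simp
      fix w assume "w \<in> closed_segment (Complex a0 y) (Complex (a0 + 2 * pi) y)"
      hence w: "Im w = y" "a0 \<le> Re w" "Re w \<le> a0 + 2*pi" by (auto simp: seg)
      have "cmod (f w) \<le> M" using w y a0 a0le alpha by (intro Mb) auto
      moreover have "cmod (k w) \<le> K" using kb w by simp
      ultimately show "cmod (f w * k w) \<le> M * K"
        by (simp add: norm_mult mult_mono Mpos K0)
    qed
    also have "cmod (Complex (a0+2*pi) y - Complex a0 y) = 2*pi"
    proof -
      have "Complex (a0+2*pi) y - Complex a0 y = complex_of_real (2*pi)" by (simp add: complex_eq_iff)
      thus ?thesis by simp
    qed
    finally show ?thesis .
  qed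
  have half_pos: "contour_integral (linepath (Complex a0 (-\<beta>)) (Complex (a0+2*pi) (-\<beta>))) f
      = contour_integral (linepath (Complex a0 0) (Complex (a0+2*pi) 0)) f" if bpos: "b > 0"
  proof -
    define Sh where "Sh = box (Complex (a0-1) (-\<beta>')) (Complex (a0+2*pi+1) (b/2))"
    have ShS0: "Sh \<subseteq> S0" using \<beta>' ab bpos by (auto simp: Sh_def in_box_complex_iff inS0 b_def)
    have "contour_integral (linepath (Complex a0 (-\<beta>)) (Complex (a0+2*pi) (-\<beta>))) f
      - contour_integral (linepath (Complex a0 0) (Complex (a0+2*pi) 0)) f = 2*pi*\<i> * (\<Sum>q\<in>{}. residue f q)"
    proof (rule rect_residue)
      show "open Sh" "connected Sh" by (auto simp: Sh_def intro!: convex_connected)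
      show "f holomorphic_on Sh - {}" using ShS0 Bne bpos by (intro fhol) (auto simp: Sh_def in_box_complex_iff)
      show "cbox (Complex a0 (- \<beta>)) (Complex (a0 + 2 * pi) 0) \<subseteq> Sh"
        using \<beta>' bpos by (auto simp: Sh_def in_box_complex_iff in_cbox_complex_iff)
      show "\<And>w. w \<in> cbox (Complex a0 (- \<beta>)) (Complex (a0 + 2 * pi) 0) \<Longrightarrow> f (w + of_real (2 * pi)) = f w"
        using fper ab by (auto simp: in_cbox_complex_iff inS0)
    qed (use alpha in auto)
    thus ?thesis by simp
  qed
  have half_neg: "contour_integral (linepath (Complex a0 0) (Complex (a0+2*pi) 0)) f
      = contour_integral (linepath (Complex a0 \<beta>) (Complex (a0+2*pi) \<beta>)) f" if bneg: "b < 0"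
  proof -
    define Sh where "Sh = box (Complex (a0-1) (b/2)) (Complex (a0+2*pi+1) \<beta>')"
    have ShS0: "Sh \<subseteq> S0" using \<beta>' ab bneg by (auto simp: Sh_def in_box_complex_iff inS0 b_def)
    have "contour_integral (linepath (Complex a0 0) (Complex (a0+2*pi) 0)) f
      - contour_integral (linepath (Complex a0 \<beta>) (Complex (a0+2*pi) \<beta>)) f = 2*pi*\<i> * (\<Sum>q\<in>{}. residue f q)"
    proof (rule rect_residue)
      show "open Sh" "connected Sh" by (auto simp: Sh_def intro!: convex_connected)
      show "f holomorphic_on Sh - {}" using ShS0 Bne bneg by (intro fhol) (auto simp: Sh_def in_box_complex_iff)
      show "cbox (Complex a0 0) (Complex (a0 + 2 * pi) \<beta>) \<subseteq> Sh"
        using \<beta>' bneg by (auto simp: Sh_def in_box_complex_iff in_cbox_complex_iff)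
      show "\<And>w. w \<in> cbox (Complex a0 0) (Complex (a0 + 2 * pi) \<beta>) \<Longrightarrow> f (w + of_real (2 * pi)) = f w"
        using fper ab by (auto simp: in_cbox_complex_iff inS0)
    qed (use alpha in auto)
    thus ?thesis by simp
  qed
  have I0: "contour_integral (linepath 0 (of_real(2*pi))) f
      = contour_integral (linepath (Complex a0 0) (Complex (a0+2*pi) 0)) f"
  proof -
    have Rsub: "\<real> \<subseteq> S0" using alpha by (auto simp: inS0 complex_is_Real_iff)
    have contR: "continuous_on \<real> f"
      using Rsub Bne bne by (intro holomorphic_on_imp_continuous_on fhol) (auto simp: complex_is_Real_iff)
    have segR: "closed_segment (of_real x) (of_real y) \<subseteq> \<real>" for x y
      by (intro closed_segment_subset convex_Reals) auto
    have cs: "continuous_on (closed_segment (of_real x) (of_real y)) f" for x y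
      by (rule continuous_on_subset[OF contR segR])
    have mem: "(of_real c :: complex) \<in> closed_segment (of_real x) (of_real y)" if "x \<le> c" "c \<le> y" for x y c
      using that by (auto simp: closed_segment_same_Im closed_segment_eq_real_ivl)
    define L where "L = (\<lambda>x y. contour_integral (linepath (of_real x) (of_real y)) f)"
    have "L 0 (2*pi) = L 0 a0 + L a0 (2*pi)"
      unfolding L_def using a0 a0le by (intro contour_integral_split_linepath cs mem) auto
    moreover have "L a0 (a0 + 2*pi) = L a0 (2*pi) + L (2*pi) (a0 + 2*pi)"
      unfolding L_def using a0 a0le by (intro contour_integral_split_linepath cs mem) auto
    moreover have "L (2*pi) (a0 + 2*pi) = L 0 a0"
    proof -
      have "L (2*pi) (a0 + 2*pi) = contour_integral (linepath (0 + of_real (2*pi)) (of_real a0 + of_real (2*pi))) f"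
        by (simp add: L_def)
      also have "\<dots> = contour_integral (linepath 0 (of_real a0)) (\<lambda>w. f (w + of_real (2*pi)))"
        by (rule contour_integral_linepath_shift)
      also have "\<dots> = contour_integral (linepath 0 (of_real a0)) f"
      proof (rule contour_integral_eq)
        fix w assume "w \<in> path_image (linepath 0 (complex_of_real a0))"
        hence "w \<in> \<real>" using segR[of 0 a0] by auto
        thus "f (w + complex_of_real (2 * pi)) = f w" using Rsub fper by auto
      qed
      finally show ?thesis by (simp add: L_def)
    qed
    ultimately have "L 0 (2*pi) = L a0 (a0 + 2*pi)" by simp
    moreover have "Complex a0 0 = of_real a0" "Complex (a0 + 2*pi) 0 = of_real (a0 + 2*pi)"
      by (simp_all add: complex_eq_iff)
    ultimately show ?thesis by (simp add: L_def)
  qed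
  define Lb where "Lb = (\<lambda>g. contour_integral (linepath (Complex a0 (-\<beta>)) (Complex (a0+2*pi) (-\<beta>))) g)"
  define Lt where "Lt = (\<lambda>g. contour_integral (linepath (Complex a0 \<beta>) (Complex (a0+2*pi) \<beta>)) g)"
  define T where "T = (2*pi/N) * (\<Sum>j=1..N. f (tj j))"
  define I where "I = contour_integral (linepath 0 (of_real(2*pi))) f"
  define E1 where "E1 = (\<lambda>w. exp (\<i> * of_nat N * w))"
  have E1D: "E1 w = D w + 1" for w by (simp add: E1_def D_def)
  have E1hol: "E1 holomorphic_on UNIV" unfolding E1_def by (intro holomorphic_intros)
  have E1per: "E1 (w + of_real(2*pi)) = E1 w" for w using Dper[of w] by (simp add: E1D)
  have E1tj: "E1 (tj j) = 1" for j using Dtj[of j] by (simp add: E1D)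
  have normE1: "cmod (E1 w) = exp (- real N * Im w)" for w by (simp add: E1_def norm_exp_iN)
  have D_E1: "D w = E1 w - 1" for w by (simp add: E1D)
  have hol_invD: "(\<lambda>w. 1 / D w) holomorphic_on W"
    using DW by (intro holomorphic_on_divide holomorphic_on_const holomorphic_on_subset[OF Dhol]) auto
  have hol_E1D: "(\<lambda>w. E1 w / D w) holomorphic_on W"
    using DW by (intro holomorphic_on_divide holomorphic_on_subset[OF E1hol] holomorphic_on_subset[OF Dhol]) auto
  have Nb: "real N * \<beta> > 0" using Npos alpha by simp
  have bnd1: "cmod (1 / D w) \<le> 1/(exp(N*\<beta>) - 1)" if "Im w = -\<beta>" for w
  proof -
    have "cmod (E1 w) = exp (real N * \<beta>)" using normE1[of w] that by simp
    thus ?thesis using kb1[of "E1 w" "N*\<beta>"] Nb by (simp add: D_E1)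
  qed
  have bnd2: "cmod (E1 w / D w) \<le> 1/(exp(N*\<beta>) - 1)" if "Im w = \<beta>" for w
  proof -
    have "cmod (E1 w) = exp (- (real N * \<beta>))" using normE1[of w] that by simp
    thus ?thesis using kb2[of "E1 w" "N*\<beta>"] Nb by (simp add: D_E1)
  qed
  have X: "cmod (Lb (\<lambda>w. f w * (1 / D w))) \<le> M * (1/(exp(N*\<beta>)-1)) * (2*pi)"
    unfolding Lb_def by (rule lb) (use hol_invD bnd1 in auto)
  have Y: "cmod (Lt (\<lambda>w. f w * (E1 w / D w))) \<le> M * (1/(exp(N*\<beta>)-1)) * (2*pi)"
    unfolding Lt_def by (rule lb) (use hol_E1D bnd2 in auto)
  have fin: "cmod (X - Y - 2*pi*\<i>*(R*K)) \<le> 2*pi*(cmod R/(exp(N*\<bar>Im s\<bar>)-1) + 2*M/(exp(N*\<beta>)-1))"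
    if hX: "cmod X \<le> M*(1/(exp(N*\<beta>)-1))*(2*pi)" and hY: "cmod Y \<le> M*(1/(exp(N*\<beta>)-1))*(2*pi)"
      and hK: "cmod K \<le> 1/(exp(N*\<bar>Im s\<bar>)-1)" for X Y K
  proof -
    have "cmod (X - Y - 2*pi*\<i>*(R*K)) \<le> cmod (X - Y) + cmod (2*pi*\<i>*(R*K))"
      by (rule norm_triangle_ineq4)
    also have "cmod (X - Y) \<le> cmod X + cmod Y" by (rule norm_triangle_ineq4)
    also have "cmod (2*pi*\<i>*(R*K)) = 2*pi*(cmod R * cmod K)" by (simp add: norm_mult)
    also have "cmod R * cmod K \<le> cmod R * (1/(exp(N*\<bar>Im s\<bar>)-1))"
      using hK by (intro mult_left_mono) auto
    finally have "cmod (X - Y - 2*pi*\<i>*(R*K)) \<le> cmod X + cmod Y + 2*pi*(cmod R * (1/(exp(N*\<bar>Im s\<bar>)-1)))"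
      by simp
    also have "\<dots> \<le> M*(1/(exp(N*\<beta>)-1))*(2*pi) + M*(1/(exp(N*\<beta>)-1))*(2*pi) + 2*pi*(cmod R * (1/(exp(N*\<bar>Im s\<bar>)-1)))"
      using hX hY by linarith
    also have "\<dots> = 2*pi*(cmod R/(exp(N*\<bar>Im s\<bar>)-1) + 2*M/(exp(N*\<beta>)-1))"
      by (simp add: divide_inverse algebra_simps)
    finally show ?thesis .
  qed
  have ciF: "g contour_integrable_on linepath (Complex a0 y) (Complex (a0+2*pi) y)"
    if "y = \<beta> \<or> y = -\<beta>" "k holomorphic_on W" "g = (\<lambda>w. f w * k w)" for y g k
    using that fW by (auto intro!: ci holomorphic_on_mult)
  have cif: "f contour_integrable_on linepath (Complex a0 y) (Complex (a0+2*pi) y)" if "y = \<beta> \<or> y = -\<beta>" for y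
    using that fW by (auto intro!: ci)
  have main: "cmod (T - I) \<le> 2*pi*(cmod R/(exp(N*\<bar>Im s\<bar>) - 1) + 2*M/(exp(N*\<beta>) - 1))"
  proof (cases "b > 0")
    case True
    have g: "Lb (\<lambda>w. f w * (E1 w / D w)) - Lt (\<lambda>w. f w * (E1 w / D w)) = T + 2*pi*\<i>*(R * (E1 p / D p))"
      using gen[OF E1hol E1per E1tj] by (simp add: Lb_def Lt_def T_def)
    have "I = Lb f" using I0 half_pos[OF True] by (simp add: I_def Lb_def)
    have diff: "Lb (\<lambda>w. f w * (E1 w / D w)) - Lb f = Lb (\<lambda>w. f w * (1 / D w))"
    proof -
      have "Lb (\<lambda>w. f w * (E1 w / D w)) - Lb f = Lb (\<lambda>w. f w * (E1 w / D w) - f w)"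
        unfolding Lb_def
        by (rule contour_integral_diff[symmetric], rule ciF[OF _ hol_E1D], simp, simp, rule cif) simp
      also have "\<dots> = Lb (\<lambda>w. f w * (1 / D w))"
        unfolding Lb_def
      proof (rule contour_integral_eq)
        fix w assume "w \<in> path_image (linepath (Complex a0 (- \<beta>)) (Complex (a0 + 2 * pi) (- \<beta>)))"
        hence "w \<in> W" using segW[of "-\<beta>"] by auto
        hence "D w \<noteq> 0" by (rule DW)
        thus "f w * (E1 w / D w) - f w = f w * (1 / D w)" by (simp add: E1D field_simps)
      qed
      finally show ?thesis .
    qed
    have eqTI: "T - I = Lb (\<lambda>w. f w * (1 / D w)) - Lt (\<lambda>w. f w * (E1 w / D w)) - 2*pi*\<i>*(R * (E1 p / D p))"
      using g diff \<open>I = Lb f\<close> by (simp add: algebra_simps)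
    have Kb: "cmod (E1 p / D p) \<le> 1/(exp(N*\<bar>Im s\<bar>)-1)"
    proof -
      have "cmod (E1 p) = exp (- (real N * \<bar>Im s\<bar>))" using normE1[of p] Rep True by (simp add: b_def)
      moreover have "real N * \<bar>Im s\<bar> > 0" using Npos ab by simp
      ultimately show ?thesis using kb2[of "E1 p" "N*\<bar>Im s\<bar>"] by (simp add: D_E1)
    qed
    show ?thesis unfolding eqTI by (rule fin[OF X Y Kb])
  next
    case False
    hence bneg: "b < 0" using bne by simp
    have g: "Lb (\<lambda>w. f w * (1 / D w)) - Lt (\<lambda>w. f w * (1 / D w)) = T + 2*pi*\<i>*(R * (1 / D p))"
      using gen[of "\<lambda>_. 1"] by (simp add: Lb_def Lt_def T_def)
    have "I = Lt f" using I0 half_neg[OF bneg] by (simp add: I_def Lt_def)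
    have add: "Lt (\<lambda>w. f w * (1 / D w)) + Lt f = Lt (\<lambda>w. f w * (E1 w / D w))"
    proof -
      have "Lt (\<lambda>w. f w * (1 / D w)) + Lt f = Lt (\<lambda>w. f w * (1 / D w) + f w)"
        unfolding Lt_def
        by (rule contour_integral_add[symmetric], rule ciF[OF _ hol_invD], simp, simp, rule cif) simp
      also have "\<dots> = Lt (\<lambda>w. f w * (E1 w / D w))"
        unfolding Lt_def
      proof (rule contour_integral_eq)
        fix w assume "w \<in> path_image (linepath (Complex a0 \<beta>) (Complex (a0 + 2 * pi) \<beta>))"
        hence "w \<in> W" using segW[of "\<beta>"] by auto
        hence "D w \<noteq> 0" by (rule DW)
        thus "f w * (1 / D w) + f w = f w * (E1 w / D w)" by (simp add: E1D field_simps)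
      qed
      finally show ?thesis .
    qed
    have eqTI: "T - I = Lb (\<lambda>w. f w * (1 / D w)) - Lt (\<lambda>w. f w * (E1 w / D w)) - 2*pi*\<i>*(R * (1 / D p))"
      using g add \<open>I = Lt f\<close> by (simp add: algebra_simps)
    have Kb: "cmod (1 / D p) \<le> 1/(exp(N*\<bar>Im s\<bar>)-1)"
    proof -
      have "cmod (E1 p) = exp (real N * \<bar>Im s\<bar>)" using normE1[of p] Rep bneg by (simp add: b_def)
      moreover have "real N * \<bar>Im s\<bar> > 0" using Npos ab by simp
      ultimately show ?thesis using kb1[of "E1 p" "N*\<bar>Im s\<bar>"] by (simp add: D_E1)
    qed
    show ?thesis unfolding eqTI by (rule fin[OF X Y Kb])
  qed
  thus ?thesis by (simp add: T_def I_def tj_def)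
qed

theorem theorem2p3:
  fixes Z \<tau> :: "complex \<Rightarrow> complex" and \<alpha> :: real and \<Omega> :: "complex set"
  assumes alpha_pos: "\<alpha> > 0"
    and Z_analytic: "Z analytic_on closed_strip \<alpha>"
    and Z_periodic: "\<And>t::real. Z (of_real (t + 2 * pi)) = Z (of_real t)"
    and Z_inj_mod: "\<And>s1 s2. s1 \<in> closed_strip \<alpha> \<Longrightarrow> s2 \<in> closed_strip \<alpha> \<Longrightarrow>
                       Z s1 = Z s2 \<Longrightarrow> \<exists>k::int. s1 = s2 + of_int k * (2 * pi)"
    and Z'_nonzero: "\<And>t::real. deriv Z (of_real t) \<noteq> 0"
    and simple: "simple_path (bcurve Z)"
    and ccw: "\<And>w. w \<in> inside (path_image (bcurve Z)) \<Longrightarrow> winding_number (bcurve Z) w = 1"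
    and Omega: "\<Omega> = inside (path_image (bcurve Z)) \<or> \<Omega> = outside (path_image (bcurve Z))"
    and tau_real: "\<And>t::real. \<tau> (Z (of_real t)) \<in> \<real>"
    and tau_analytic: "\<tau> analytic_on closure (Z ` strip \<alpha>)"
    and tau_bounded: "bounded (\<tau> ` closure (Z ` strip \<alpha>))"
  shows "\<forall>z \<in> Z ` strip \<alpha> - path_image (bcurve Z). \<forall>s \<in> strip \<alpha>. Z s = z \<longrightarrow>
           (\<forall>C. C > cmod (\<tau> z) \<longrightarrow>
              (\<exists>N0::nat. \<forall>N\<ge>N0. \<bar>layer_err Z \<tau> N z\<bar> \<le> C * exp (- \<bar>Im s\<bar> * real N)))"
proof (intro ballI allI impI)
  fix z s C
  assume zin: "z \<in> Z ` strip \<alpha> - path_image (bcurve Z)" and sin: "s \<in> strip \<alpha>" and Zs: "Z s = z"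
    and Cgt: "cmod (\<tau> z) < C"
  define S0 where "S0 = strip \<alpha>"
  have inS0: "w \<in> S0 \<longleftrightarrow> \<bar>Im w\<bar> < \<alpha>" for w by (simp add: S0_def strip_def)
  have S0open: "open S0" unfolding S0_def by (rule open_strip)
  have S0conn: "connected S0" unfolding S0_def by (intro convex_connected convex_strip)
  have S0cs: "S0 \<subseteq> closed_strip \<alpha>" by (auto simp: inS0 closed_strip_def)
  have Zhol: "Z holomorphic_on S0"
    using Z_analytic S0cs analytic_on_subset analytic_imp_holomorphic by blast
  obtain U where U: "open U" "Z ` S0 \<subseteq> U" "\<tau> holomorphic_on U"
  proof -
    have "\<tau> analytic_on Z ` S0"
      using tau_analytic closure_subset analytic_on_subset unfolding S0_def by blast
    thus ?thesis using that analytic_on_holomorphic by metis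
  qed
  have tZ: "(\<lambda>w. \<tau> (Z w)) holomorphic_on S0"
    using holomorphic_on_compose_gen[OF Zhol U(3) U(2)] by (simp add: o_def)
  have dZ: "deriv Z holomorphic_on S0" by (rule holomorphic_deriv[OF Zhol S0open])
  have Zder: "(Z has_field_derivative deriv Z w) (at w)" if "w \<in> S0" for w
    by (rule holomorphic_derivI[OF Zhol S0open that])
  have shiftS0: "w + of_real c \<in> S0" if "w \<in> S0" for w c using that by (simp add: inS0)
  have Zper: "Z (w + of_real (2*pi)) = Z w" if w: "w \<in> S0" for w
  proof -
    have "(Z \<circ> (\<lambda>w. w + of_real (2*pi))) holomorphic_on S0"
      by (rule holomorphic_on_compose_gen[OF _ Zhol]) (auto intro!: holomorphic_intros simp: inS0)
    hence hol: "(\<lambda>w. Z (w + of_real (2*pi)) - Z w) holomorphic_on S0"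
      using Zhol by (intro holomorphic_intros) (auto simp: o_def)
    have Rsub: "\<real> \<subseteq> S0" using alpha_pos by (auto simp: inS0 complex_is_Real_iff)
    have z0: "0 \<in> S0" using alpha_pos by (simp add: inS0)
    have lim: "(0::complex) islimpt \<real>"
      unfolding islimpt_approachable
    proof (intro allI impI)
      fix e :: real assume "e > 0"
      thus "\<exists>x'\<in>\<real>. x' \<noteq> (0::complex) \<and> dist x' 0 < e"
        by (intro bexI[of _ "complex_of_real (e/2)"]) (auto simp: dist_norm)
    qed
    have zr: "Z (x + of_real (2*pi)) - Z x = 0" if xR: "x \<in> \<real>" for x
    proof -
      obtain r where r: "x = of_real r" using xR by (auto elim: Reals_cases)
      have "Z (of_real r + of_real (2*pi)) = Z (of_real r)" using Z_periodic[of r] by (metis of_real_add)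
      thus ?thesis using r by simp
    qed
    have "Z (w + of_real (2*pi)) - Z w = 0"
      using analytic_continuation[OF hol S0open S0conn Rsub z0 lim _ w] zr by blast
    thus ?thesis by simp
  qed
  have dZper: "deriv Z (w + of_real (2*pi)) = deriv Z w" if w: "w \<in> S0" for w
  proof -
    have "((\<lambda>u. Z (u + of_real (2*pi))) has_field_derivative deriv Z (w + of_real (2*pi)) * 1) (at w)"
      by (rule DERIV_chain2[of Z "deriv Z (w + of_real (2*pi))" "\<lambda>u. u + of_real (2*pi)" w,
            OF Zder[OF shiftS0[OF w, of "2*pi"]]]) (auto intro!: derivative_eq_intros)
    hence "deriv (\<lambda>u. Z (u + of_real (2*pi))) w = deriv Z (w + of_real (2*pi))"
      by (simp add: DERIV_imp_deriv)
    moreover have "deriv (\<lambda>u. Z (u + of_real (2*pi))) w = deriv Z w"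
    proof (rule deriv_cong_ev)
      show "\<forall>\<^sub>F x in nhds w. Z (x + of_real (2*pi)) = Z x"
        using eventually_nhds_in_open[OF S0open w] by (rule eventually_mono) (rule Zper)
    qed simp
    ultimately show ?thesis by simp
  qed
  have Zpern: "Z (w + of_real (of_nat n * (2*pi))) = Z w" if "w \<in> S0" for w n
  proof (induction n)
    case (Suc n)
    have "Z (w + of_real (of_nat (Suc n) * (2*pi))) = Z ((w + of_real (of_nat n * (2*pi))) + of_real (2*pi))"
      by (simp add: algebra_simps)
    also have "\<dots> = Z (w + of_real (of_nat n * (2*pi)))" using that by (intro Zper shiftS0)
    finally show ?case using Suc by simp
  qed simp
  have Zperk: "Z (w + of_real (of_int k * (2*pi))) = Z w" if "w \<in> S0" for w and k :: int
  proof (cases "k \<ge> 0")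
    case True
    then obtain n where "k = int n" by (metis nonneg_int_cases)
    thus ?thesis using Zpern[OF that, of n] by simp
  next
    case False
    then obtain n where n: "k = - int n" by (metis nonpos_int_cases linorder_not_le less_imp_le)
    define w' where "w' = w + of_real (of_int k * (2*pi))"
    have "w' \<in> S0" unfolding w'_def using that by (rule shiftS0)
    hence "Z (w' + of_real (of_nat n * (2*pi))) = Z w'" by (rule Zpern)
    moreover have "w' + of_real (of_nat n * (2*pi)) = w" by (simp add: w'_def n algebra_simps)
    ultimately have "Z w' = Z w" by metis
    thus ?thesis by (simp add: w'_def)
  qed
  have Zreal: "Z (of_real t) \<noteq> z" for t
  proof
    assume eq: "Z (of_real t) = z"
    define k where "k = \<lfloor>t / (2*pi)\<rfloor>"
    define t' where "t' = t - of_int k * (2*pi)"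
    have "of_int k \<le> t / (2*pi)" "t / (2*pi) < of_int k + 1" unfolding k_def by linarith+
    hence t': "0 \<le> t'" "t' < 2*pi" unfolding t'_def by (simp_all add: field_simps)
    have "Z (of_real t') = Z (of_real t' + of_real (of_int k * (2*pi)))"
      using alpha_pos by (intro Zperk[symmetric]) (simp add: inS0)
    also have "\<dots> = z" using eq by (simp add: t'_def flip: of_real_add)
    finally have "Z (of_real t') = z" .
    moreover have "bcurve Z (t' / (2*pi)) = Z (of_real t')" by (simp add: bcurve_def)
    moreover have "t' / (2*pi) \<in> {0..1}" using t' by (simp add: field_simps)
    ultimately have "z \<in> path_image (bcurve Z)" unfolding path_image_def by (metis image_eqI)
    thus False using zin by simp
  qed
  define b where "b = Im s"
  have sS0: "s \<in> S0" using sin by (simp add: S0_def)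
  have bne: "b \<noteq> 0"
  proof
    assume "b = 0"
    hence "s = of_real (Re s)" by (simp add: b_def complex_eq_iff)
    thus False using Zreal[of "Re s"] Zs by simp
  qed
  have bal: "\<bar>b\<bar> < \<alpha>" using sS0 by (simp add: inS0 b_def)
  define \<beta> where "\<beta> = (\<bar>b\<bar> + \<alpha>)/2"
  have \<beta>: "\<bar>b\<bar> < \<beta>" "\<beta> < \<alpha>" using bal by (auto simp: \<beta>_def)
  define A where "A = (\<lambda>w. \<tau> (Z w) * deriv Z w)"
  define B where "B = (\<lambda>w. Z w - z)"
  define f where "f = (\<lambda>w. A w / B w)"
  have pS0: "s + of_real (of_int k * (2*pi)) \<in> S0" for k :: int using sS0 by (rule shiftS0)
  have Zp: "Z (s + of_real (of_int k * (2*pi))) = z" for k :: int using Zperk[OF sS0] Zs by simp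
  have derne: "deriv Z (s + of_real (of_int k * (2*pi))) \<noteq> 0" for k :: int
  proof -
    define p where "p = s + of_real (of_int k * (2*pi))"
    define r where "r = min pi (\<alpha> - \<bar>b\<bar>)"
    have r: "r > 0" using bal by (simp add: r_def)
    have Imp: "Im p = b" by (simp add: p_def b_def)
    have ballS0: "ball p r \<subseteq> S0"
    proof
      fix w assume "w \<in> ball p r"
      hence "cmod (w - p) < r" by (simp add: dist_norm norm_minus_commute)
      hence "\<bar>Im w - Im p\<bar> < r" using abs_Im_le_cmod[of "w - p"] by simp
      hence "\<bar>Im w - b\<bar> < \<alpha> - \<bar>b\<bar>" using Imp by (simp add: r_def)
      thus "w \<in> S0" by (simp add: inS0)
    qed
    have inj: "inj_on Z (ball p r)"
    proof (rule inj_onI)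
      fix w1 w2 assume w: "w1 \<in> ball p r" "w2 \<in> ball p r" and eq: "Z w1 = Z w2"
      obtain k' :: int where k': "w1 = w2 + of_real (of_int k' * (2*pi))"
        using Z_inj_mod[OF _ _ eq] w ballS0 S0cs by blast
      have "cmod (w1 - w2) < 2*r"
      proof -
        have "cmod (w1 - w2) \<le> cmod (w1 - p) + cmod (p - w2)" using norm_triangle_ineq[of "w1 - p" "p - w2"] by simp
        also have "\<dots> < r + r" using w by (intro add_strict_mono) (auto simp: dist_norm norm_minus_commute)
        finally show ?thesis by simp
      qed
      moreover have "w1 - w2 = of_real (of_int k' * (2*pi))" using k' by simp
      hence "cmod (w1 - w2) = \<bar>of_int k' * (2*pi)\<bar>" by (simp only: norm_of_real)
      moreover have "r \<le> pi" by (simp add: r_def)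
      ultimately have "\<bar>of_int k' * (2*pi)\<bar> < 2 * pi" by linarith
      hence "\<bar>of_int k'\<bar> * (2*pi) < 1 * (2*pi)" by (simp add: abs_mult)
      hence "\<bar>real_of_int k'\<bar> < 1" by (subst (asm) mult_less_cancel_right) auto
      hence "k' = 0" by linarith
      thus "w1 = w2" using k' by simp
    qed
    have "deriv Z p \<noteq> 0"
      by (rule holomorphic_injective_imp_regular[OF holomorphic_on_subset[OF Zhol ballS0] open_ball inj])
         (use r in simp)
    thus ?thesis by (simp add: p_def)
  qed
  obtain M where Mb: "\<And>w. \<bar>Im w\<bar> = \<beta> \<Longrightarrow> 0 \<le> Re w \<Longrightarrow> Re w \<le> 4*pi \<Longrightarrow> cmod (f w) \<le> M"
  proof -
    define K where "K = closed_segment (Complex 0 (-\<beta>)) (Complex (4*pi) (-\<beta>)) \<union> closed_segment (Complex 0 \<beta>) (Complex (4*pi) \<beta>)"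
    have Kc: "compact K" by (simp add: K_def compact_Un)
    have Kmem: "w \<in> K" if "\<bar>Im w\<bar> = \<beta>" "0 \<le> Re w" "Re w \<le> 4*pi" for w
      using that by (auto simp: K_def closed_segment_same_Im closed_segment_eq_real_ivl abs_if split: if_splits)
    have KS: "K \<subseteq> S0" "\<And>w. w \<in> K \<Longrightarrow> Im w \<noteq> b"
      using \<beta> by (auto simp: K_def closed_segment_same_Im inS0)
    have Bnz: "B w \<noteq> 0" if wK: "w \<in> K" for w
    proof
      assume "B w = 0"
      hence "Z w = Z s" by (simp add: B_def Zs)
      then obtain k' :: int where "w = s + of_real (of_int k' * (2*pi))"
        using Z_inj_mod[of w s] wK KS sS0 S0cs by blast
      hence "Im w = b" by (simp add: b_def)
      thus False using KS(2)[OF wK] by simp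
    qed
    have "f holomorphic_on K" unfolding f_def A_def
    proof (rule holomorphic_on_divide)
      show "(\<lambda>w. \<tau> (Z w) * deriv Z w) holomorphic_on K"
        using holomorphic_on_subset[OF tZ KS(1)] holomorphic_on_subset[OF dZ KS(1)] by (rule holomorphic_on_mult)
      show "B holomorphic_on K" unfolding B_def
        using holomorphic_on_subset[OF Zhol KS(1)] by (intro holomorphic_on_diff holomorphic_on_const)
      show "\<And>w. w \<in> K \<Longrightarrow> B w \<noteq> 0" by (rule Bnz)
    qed
    hence "continuous_on K f" by (rule holomorphic_on_imp_continuous_on)
    hence "compact (f ` K)" using Kc by (rule compact_continuous_image)
    then obtain M where "\<And>x. x \<in> f ` K \<Longrightarrow> norm x \<le> M"
      using compact_imp_bounded bounded_iff by metis
    thus ?thesis using that Kmem by blast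
  qed
  have est: "cmod ((2*pi/N) * (\<Sum>j=1..N. f (of_real (2*pi*real j/real N)))
            - contour_integral (linepath 0 (of_real(2*pi))) f)
         \<le> 2*pi*(cmod (\<tau> z)/(exp(N*\<bar>Im s\<bar>) - 1) + 2*M/(exp(N*\<beta>) - 1))" if N: "N \<ge> 1" for N
    unfolding f_def
  proof (rule trap_err[where B'="deriv Z" and \<alpha>=\<alpha>])
    show "0 < \<bar>Im s\<bar>" "\<bar>Im s\<bar> < \<beta>" "\<beta> < \<alpha>" using bne \<beta> by (auto simp: b_def)
    show "A holomorphic_on strip \<alpha>" unfolding A_def using tZ dZ unfolding S0_def by (rule holomorphic_on_mult)
    show "B holomorphic_on strip \<alpha>" unfolding B_def using Zhol unfolding S0_def by (intro holomorphic_on_diff holomorphic_on_const)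
    show "\<And>w. w \<in> strip \<alpha> \<Longrightarrow> (B has_field_derivative deriv Z w) (at w)"
      unfolding B_def using Zder by (auto simp: S0_def intro!: derivative_eq_intros)
    show "\<And>w. w \<in> strip \<alpha> \<Longrightarrow> A (w + of_real(2*pi)) = A w"
      unfolding A_def using Zper dZper by (simp add: S0_def)
    show "\<And>w. w \<in> strip \<alpha> \<Longrightarrow> B (w + of_real(2*pi)) = B w"
      unfolding B_def using Zper by (simp add: S0_def)
    show "\<And>k::int. B (s + of_real (of_int k * (2*pi))) = 0" unfolding B_def using Zp by simp
    show "\<And>w. w \<in> strip \<alpha> \<Longrightarrow> B w = 0 \<Longrightarrow> \<exists>k::int. w = s + of_real (of_int k * (2*pi))"
    proof -
      fix w assume w: "w \<in> strip \<alpha>" and "B w = 0"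
      hence "Z w = Z s" by (simp add: B_def Zs)
      moreover have "w \<in> closed_strip \<alpha>" "s \<in> closed_strip \<alpha>" using w sS0 S0cs by (auto simp: S0_def)
      ultimately show "\<exists>k::int. w = s + of_real (of_int k * (2*pi))" using Z_inj_mod by blast
    qed
    show "\<And>k::int. deriv Z (s + of_real (of_int k * (2*pi))) \<noteq> 0" by (rule derne)
    show "\<And>k::int. A (s + of_real (of_int k * (2*pi))) / deriv Z (s + of_real (of_int k * (2*pi))) = \<tau> z"
      unfolding A_def using derne Zp by simp
    show "\<And>w. \<bar>Im w\<bar> = \<beta> \<Longrightarrow> 0 \<le> Re w \<Longrightarrow> Re w \<le> 4*pi \<Longrightarrow> cmod (A w / B w) \<le> M"
      using Mb by (simp add: f_def)
    show "N \<ge> 1" by (rule N)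
  qed
  have errb: "\<bar>layer_err Z \<tau> N z\<bar> \<le> cmod (\<tau> z)/(exp(N*\<bar>Im s\<bar>) - 1) + 2*M/(exp(N*\<beta>) - 1)"
    if N: "N \<ge> 1" for N
  proof -
    define T where "T = (2*pi/N) * (\<Sum>j=1..N. f (of_real (2*pi*real j/real N)))"
    define I where "I = contour_integral (linepath 0 (of_real(2*pi))) f"
    have Npos: "real N > 0" using N by simp
    have vN: "layer_vN Z \<tau> N z = (-1 / (2*pi*\<i>)) * T"
    proof -
      have "(\<Sum>j=1..N. let s = complex_of_real (2 * pi * real j / real N) in
              \<tau> (Z s) / (Z s - z) * deriv Z s) = (\<Sum>j=1..N. f (of_real (2*pi*real j/real N)))"
        by (simp add: Let_def f_def A_def B_def)
      thus ?thesis unfolding layer_vN_def T_def using Npos by (simp add: field_simps)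
    qed
    have v: "layer_v Z \<tau> z = (-1 / (2*pi*\<i>)) * I"
    proof -
      have "I = integral {Re 0..Re (complex_of_real (2*pi))} (\<lambda>x. f (of_real x))"
        unfolding I_def by (rule contour_integral_linepath_Reals_eq) auto
      also have "\<dots> = integral {0..2*pi} (\<lambda>s::real. \<tau> (Z (of_real s)) / (Z (of_real s) - z) * deriv Z (of_real s))"
        by (simp add: f_def A_def B_def)
      finally show ?thesis unfolding layer_v_def by simp
    qed
    have "\<bar>layer_err Z \<tau> N z\<bar> \<le> cmod ((-1 / (2*pi*\<i>)) * (T - I))"
      unfolding layer_err_def vN v by (metis abs_Re_le_cmod right_diff_distrib)
    also have "\<dots> = cmod (T - I) / (2*pi)" by (simp add: norm_mult norm_divide)
    also have "\<dots> \<le> 2*pi*(cmod (\<tau> z)/(exp(N*\<bar>Im s\<bar>) - 1) + 2*M/(exp(N*\<beta>) - 1)) / (2*pi)"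
      using est[OF N] by (intro divide_right_mono) (auto simp: T_def I_def)
    also have "\<dots> = cmod (\<tau> z)/(exp(N*\<bar>Im s\<bar>) - 1) + 2*M/(exp(N*\<beta>) - 1)" by simp
    finally show ?thesis .
  qed
  have ev: "eventually (\<lambda>N. cmod (\<tau> z) / (exp (real N * \<bar>Im s\<bar>) - 1) + 2 * M / (exp (real N * \<beta>) - 1)
            \<le> C * exp (- \<bar>Im s\<bar> * real N)) sequentially"
    by (rule final_limit) (use bne \<beta> Cgt in \<open>auto simp: b_def\<close>)
  then obtain N1 where N1: "\<And>N. N \<ge> N1 \<Longrightarrow> cmod (\<tau> z) / (exp (real N * \<bar>Im s\<bar>) - 1) + 2 * M / (exp (real N * \<beta>) - 1)
            \<le> C * exp (- \<bar>Im s\<bar> * real N)"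
    unfolding eventually_sequentially by blast
  show "\<exists>N0::nat. \<forall>N\<ge>N0. \<bar>layer_err Z \<tau> N z\<bar> \<le> C * exp (- \<bar>Im s\<bar> * real N)"
  proof (intro exI[of _ "max N1 1"] allI impI)
    fix N assume "max N1 1 \<le> N"
    hence "N \<ge> N1" "N \<ge> 1" by auto
    thus "\<bar>layer_err Z \<tau> N z\<bar> \<le> C * exp (- \<bar>Im s\<bar> * real N)"
      using errb N1 order_trans by blast
  qed
qed

end
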